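(* Let $\rho,\sigma$ be quantum states, $r\ge0$, $\eta\in(0,1]$, and let $\beta^r(\rho,\sigma)=\sup_{M\in\mathcal M^r}|\operatorname{tr}(M(\rho-\sigma))|$. If $\beta^r(\rho,\sigma)<\eta$, then $D^{r,\eta}_H(\rho\|\sigma)\le-\log\big(1-\beta^r(\rho,\sigma)/\eta\big)$. Furthermore, let $\delta\ge0$ and $|\psi\rangle$ a pure state in a Hilbert space of dimension $d$, with strong complexity $C^\delta_{\mathrm{strong}}(|\psi\rangle)=\inf\{r\ge0:\beta^r(\psi,\pi)\ge1-1/d-\delta\}$, $\pi=\mathbb 1/d$, $\psi=|\psi\rangle\langle\psi|$. If $r<C^\delta_{\mathrm{strong}}(|\psi\rangle)$ and $\eta>1-d^{-1}-\delta$, then with $c=(1-d^{-1}-\delta)/\eta<1$, $$H^{r,\eta}_H(\psi)>\log d-\log\frac1{1-c}.$$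
   Context: All logarithms are natural; POVM effect = operator $0\le Q\le\mathbb 1$. $\{\mathcal M^r\}_{r\ge0}$ is a family of sets of POVM effects on the $d$-dimensional system with $\mathbb 1\in\mathcal M^0$ and $\mathcal M^r\subseteq\mathcal M^{r'}$ for $r\le r'$. Complexity relative entropy: $D^{r,\eta}_H(\rho\|\Gamma)=-\log\inf\{\operatorname{tr}(Q\Gamma)/\operatorname{tr}(Q\rho): Q\in\mathcal M^r,\ \operatorname{tr}(Q\rho)\ge\eta\}$; complexity entropy $H^{r,\eta}_H(\rho)=-D^{r,\eta}_H(\rho\|\mathbb 1)$. *)

theory Defs
  imports "HOL-Analysis.Analysis"
begin

text \<open>Operators on a d-dimensional Hilbert space are complex d x d matrices,
  with d = CARD('n) for a finite index type 'n.\<close>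

definition qform :: "complex^'n^'n \<Rightarrow> complex^'n \<Rightarrow> complex" where
  "qform A v = (\<Sum>i\<in>UNIV. cnj (v$i) * (A *v v)$i)"

text \<open>Positive semidefinite: the form v^* A v is real and nonnegative for all v
  (which in particular forces A to be Hermitian).\<close>
definition psd :: "complex^'n^'n \<Rightarrow> bool" where
  "psd A \<longleftrightarrow> (\<forall>v. Im (qform A v) = 0 \<and> Re (qform A v) \<ge> 0)"

definition povm_effect :: "complex^'n^'n \<Rightarrow> bool" where
  "povm_effect Q \<longleftrightarrow> psd Q \<and> psd (mat 1 - Q)"

definition density :: "complex^'n^'n \<Rightarrow> bool" where
  "density \<rho> \<longleftrightarrow> psd \<rho> \<and> trace \<rho> = 1"

definition proj :: "complex^'n \<Rightarrow> complex^'n^'n" where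
  "proj v = (\<chi> i j. v$i * cnj (v$j))"

definition unit_vec :: "complex^'n \<Rightarrow> bool" where
  "unit_vec v \<longleftrightarrow> (\<Sum>i\<in>UNIV. cmod (v$i) ^ 2) = 1"

definition measurement_family :: "(real \<Rightarrow> (complex^'n^'n) set) \<Rightarrow> bool" where
  "measurement_family M \<longleftrightarrow>
     (\<forall>r\<ge>0. \<forall>Q\<in>M r. povm_effect Q) \<and> mat 1 \<in> M 0 \<and>
     (\<forall>r r'. 0 \<le> r \<and> r \<le> r' \<longrightarrow> M r \<subseteq> M r')"

definition beta :: "(real \<Rightarrow> (complex^'n^'n) set) \<Rightarrow> real \<Rightarrow> complex^'n^'n \<Rightarrow> complex^'n^'n \<Rightarrow> real" where
  "beta M r \<rho> \<sigma> = Sup ((\<lambda>Q. cmod (trace (Q ** (\<rho> - \<sigma>)))) ` M r)"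

definition DH :: "(real \<Rightarrow> (complex^'n^'n) set) \<Rightarrow> real \<Rightarrow> real \<Rightarrow> complex^'n^'n \<Rightarrow> complex^'n^'n \<Rightarrow> ereal" where
  "DH M r \<eta> \<rho> \<Gamma> =
     (let m = Inf {Re (trace (Q ** \<Gamma>)) / Re (trace (Q ** \<rho>)) | Q. Q \<in> M r \<and> Re (trace (Q ** \<rho>)) \<ge> \<eta>}
      in if m = 0 then \<infinity> else ereal (- ln m))"

definition HH :: "(real \<Rightarrow> (complex^'n^'n) set) \<Rightarrow> real \<Rightarrow> real \<Rightarrow> complex^'n^'n \<Rightarrow> ereal" where
  "HH M r \<eta> \<rho> = - DH M r \<eta> \<rho> (mat 1)"

text \<open>Strong complexity inf{r >= 0. beta^r(psi, 1/d) >= 1 - 1/d - delta} (inf of empty = +infinity).\<close>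
definition C_strong :: "(real \<Rightarrow> (complex^'n^'n) set) \<Rightarrow> real \<Rightarrow> complex^'n \<Rightarrow> ereal" where
  "C_strong M \<delta> v =
     (INF r\<in>{r. r \<ge> 0 \<and> beta M r (proj v) (mat (1 / of_nat CARD('n)) :: complex^'n^'n)
                         \<ge> 1 - 1 / real CARD('n) - \<delta>}. ereal r)"

end

theory Submission imports Defs begin
lemma sum_one_UNIV:
  fixes f :: "'n::finite \<Rightarrow> 'a::comm_monoid_add"
  assumes "\<And>i. i \<noteq> a \<Longrightarrow> f i = 0"
  shows "(\<Sum>i\<in>UNIV. f i) = f a"
proof -
  have "sum f {a} = sum f UNIV"
    by (rule sum.mono_neutral_left) (use assms in auto)
  then show ?thesis by simp
qed

lemma sum_two_UNIV:
  fixes f :: "'n::finite \<Rightarrow> 'a::comm_monoid_add"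
  assumes "a \<noteq> b" "\<And>i. i \<noteq> a \<Longrightarrow> i \<noteq> b \<Longrightarrow> f i = 0"
  shows "(\<Sum>i\<in>UNIV. f i) = f a + f b"
proof -
  have "sum f {a, b} = sum f UNIV"
    by (rule sum.mono_neutral_left) (use assms in auto)
  then show ?thesis using assms(1) by simp
qed

lemma trace_mult_expand: "trace (A ** B) = (\<Sum>i\<in>UNIV. \<Sum>k\<in>UNIV. A$i$k * B$k$i)"
  unfolding trace_def matrix_matrix_mult_def by simp

lemma trace_mult_diff: "trace ((Q::complex^'n^'n) ** (A - B)) = trace (Q ** A) - trace (Q ** B)"
  unfolding trace_mult_expand by (simp add: right_diff_distrib sum_subtractf)

lemma trace_mult_mat: "trace ((Q::complex^'n^'n) ** mat k) = trace Q * k"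
proof -
  have "(\<Sum>j\<in>UNIV. Q$i$j * mat k$j$i) = Q$i$i * k" for i
    by (subst sum_one_UNIV[where a=i]) (auto simp: mat_def)
  then have "trace ((Q::complex^'n^'n) ** mat k) = (\<Sum>i\<in>UNIV. Q$i$i * k)"
    unfolding trace_mult_expand by simp
  then show ?thesis unfolding trace_def by (simp add: sum_distrib_right)
qed

lemma qform_expand: "qform A v = (\<Sum>i\<in>UNIV. \<Sum>k\<in>UNIV. cnj (v$i) * A$i$k * v$k)"
  unfolding qform_def matrix_vector_mult_def by (simp add: sum_distrib_left mult.assoc)

lemma qform_two:
  fixes A :: "complex^'n^'n"
  assumes ab: "a \<noteq> b"
  shows "qform A (\<chi> j. (if j = a then x else 0) + (if j = b then y else 0)) =
    cnj x * A$a$a * x + cnj x * A$a$b * y + cnj y * A$b$a * x + cnj y * A$b$b * y"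
proof -
  define v :: "complex^'n" where "v = (\<chi> j. (if j = a then x else 0) + (if j = b then y else 0))"
  have va: "v$a = x" and vb: "v$b = y" using ab by (simp_all add: v_def)
  have v0: "v$i = 0" if "i \<noteq> a" "i \<noteq> b" for i using that by (simp add: v_def)
  have inner: "(\<Sum>k\<in>UNIV. cnj (v$i) * A$i$k * v$k) = cnj (v$i) * A$i$a * x + cnj (v$i) * A$i$b * y" for i
    by (subst sum_two_UNIV[OF ab]) (simp_all add: v0 va vb)
  have "qform A v = (\<Sum>i\<in>UNIV. cnj (v$i) * A$i$a * x + cnj (v$i) * A$i$b * y)"
    unfolding qform_expand inner by (rule refl)
  also have "\<dots> = (cnj x * A$a$a * x + cnj x * A$a$b * y) + (cnj y * A$b$a * x + cnj y * A$b$b * y)"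
    by (subst sum_two_UNIV[OF ab]) (simp_all add: v0 va vb)
  finally show ?thesis unfolding v_def by (simp add: add.assoc)
qed

lemma qform_one:
  fixes A :: "complex^'n^'n"
  shows "qform A (\<chi> j. if j = a then 1 else 0) = A$a$a"
proof -
  define v :: "complex^'n" where "v = (\<chi> j. if j = a then 1 else 0)"
  have va: "v$a = 1" by (simp add: v_def)
  have v0: "v$i = 0" if "i \<noteq> a" for i using that by (simp add: v_def)
  have inner: "(\<Sum>k\<in>UNIV. cnj (v$i) * A$i$k * v$k) = cnj (v$i) * A$i$a" for i
    by (subst sum_one_UNIV[where a=a]) (simp_all add: v0 va)
  have "qform A v = (\<Sum>i\<in>UNIV. cnj (v$i) * A$i$a)"
    unfolding qform_expand inner by (rule refl)
  also have "\<dots> = A$a$a"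
    by (subst sum_one_UNIV[where a=a]) (simp_all add: v0 va)
  finally show ?thesis unfolding v_def .
qed
lemma psd_diag:
  fixes A :: "complex^'n^'n"
  assumes "psd A" shows "Im (A$a$a) = 0" "Re (A$a$a) \<ge> 0"
  using assms qform_one[of A a] unfolding psd_def by metis+

lemma psd_offdiag:
  fixes A :: "complex^'n^'n"
  assumes "psd A" shows "cmod (A$a$b) \<le> Re (A$a$a) + Re (A$b$b)"
proof (cases "a = b")
  case True
  then show ?thesis using psd_diag[OF assms, of a] by (simp add: cmod_eq_Re)
next
  case False
  have P: "\<And>y. Im (cnj 1 * A$a$a * 1 + cnj 1 * A$a$b * y + cnj y * A$b$a * 1 + cnj y * A$b$b * y) = 0
     \<and> Re (cnj 1 * A$a$a * 1 + cnj 1 * A$a$b * y + cnj y * A$b$a * 1 + cnj y * A$b$b * y) \<ge> 0"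
    using assms unfolding psd_def qform_two[OF False, symmetric] by blast
  have 1: "Im (A$a$a + A$a$b + A$b$a + A$b$b) = 0" "Re (A$a$a + A$a$b + A$b$a + A$b$b) \<ge> 0"
    using P[of 1] by simp_all
  have 2: "Re (A$a$a - A$a$b - A$b$a + A$b$b) \<ge> 0"
    using P[of "-1"] by simp
  have 3: "Im (A$a$a + \<i> * A$a$b - \<i> * A$b$a + A$b$b) = 0" "Re (A$a$a + \<i> * A$a$b - \<i> * A$b$a + A$b$b) \<ge> 0"
    using P[of "\<i>"] by (simp_all add: algebra_simps)
  have 4: "Re (A$a$a - \<i> * A$a$b + \<i> * A$b$a + A$b$b) \<ge> 0"
    using P[of "-\<i>"] by (simp add: algebra_simps)
  have "cmod (A$a$b) \<le> \<bar>Re (A$a$b)\<bar> + \<bar>Im (A$a$b)\<bar>" by (rule cmod_le)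
  then show ?thesis using 1 2 3 4 psd_diag[OF assms, of a] psd_diag[OF assms, of b] by auto
qed

lemma povm_entry:
  fixes Q :: "complex^'n^'n"
  assumes "povm_effect Q" shows "cmod (Q$a$b) \<le> 2"
proof -
  have "Re ((mat 1 - Q)$c$c) \<ge> 0" for c using psd_diag(2) assms unfolding povm_effect_def by blast
  then have "Re (Q$c$c) \<le> 1" for c by (simp add: mat_def)
  then show ?thesis using psd_offdiag[of Q a b] assms unfolding povm_effect_def
    by (smt (verit))
qed

lemma density_entry:
  fixes R :: "complex^'n^'n"
  assumes "density R" shows "cmod (R$a$b) \<le> 2"
proof -
  have ps: "psd R" using assms density_def by blast
  have "Re (R$c$c) \<le> 1" for c
  proof -
    have "trace R = 1" using assms density_def by blast
    then have "1 = Re (trace R)" by simp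
    also have "\<dots> = (\<Sum>i\<in>UNIV. Re (R$i$i))" by (simp add: trace_def)
    also have "\<dots> \<ge> Re (R$c$c)"
      by (rule member_le_sum) (use psd_diag(2)[OF ps] in auto)
    finally show ?thesis .
  qed
  then show ?thesis using psd_offdiag[OF ps, of a b] by (smt (verit))
qed

lemma trace_bound:
  fixes Q R S :: "complex^'n^'n"
  assumes "povm_effect Q" "density R" "density S"
  shows "cmod (trace (Q ** (R - S))) \<le> 8 * real CARD('n) ^ 2"
proof -
  have "cmod (trace (Q ** (R - S))) \<le> (\<Sum>i\<in>UNIV. cmod (\<Sum>k\<in>UNIV. Q$i$k * (R - S)$k$i))"
    unfolding trace_mult_expand by (rule norm_sum)
  also have "\<dots> \<le> (\<Sum>i\<in>(UNIV::'n set). \<Sum>k\<in>(UNIV::'n set). 8)"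
  proof (rule sum_mono)
    fix i
    have "cmod (\<Sum>k\<in>UNIV. Q$i$k * (R - S)$k$i) \<le> (\<Sum>k\<in>UNIV. cmod (Q$i$k * (R - S)$k$i))"
      by (rule norm_sum)
    also have "\<dots> \<le> (\<Sum>k\<in>(UNIV::'n set). 8)"
    proof (rule sum_mono)
      fix k
      have "cmod ((R - S)$k$i) \<le> cmod (R$k$i) + cmod (S$k$i)"
        by (simp add: norm_triangle_ineq4)
      then have "cmod ((R - S)$k$i) \<le> 4" using density_entry[OF assms(2)] density_entry[OF assms(3)]
        by (smt (verit))
      then have "cmod (Q$i$k) * cmod ((R - S)$k$i) \<le> 2 * 4"
        by (intro mult_mono povm_entry[OF assms(1)]) auto
      then show "cmod (Q$i$k * (R - S)$k$i) \<le> 8"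
        unfolding norm_mult by simp
    qed
    finally show "cmod (\<Sum>k\<in>UNIV. Q$i$k * (R - S)$k$i) \<le> (\<Sum>k\<in>(UNIV::'n set). 8)" .
  qed
  also have "\<dots> = 8 * real CARD('n) ^ 2" by (simp add: power2_eq_square)
  finally show ?thesis .
qed

lemma beta_props:
  fixes M :: "real \<Rightarrow> (complex^'n^'n) set"
  assumes "measurement_family M" "r \<ge> 0" "density R" "density S"
  shows "\<And>Q. Q \<in> M r \<Longrightarrow> cmod (trace (Q ** (R - S))) \<le> beta M r R S"
    and "beta M r R S \<ge> 0"
proof -
  have I: "mat 1 \<in> M r" using assms(1,2) unfolding measurement_family_def by blast
  have bdd: "bdd_above ((\<lambda>Q. cmod (trace (Q ** (R - S)))) ` M r)"
  proof (rule bdd_aboveI2)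
    fix Q assume "Q \<in> M r"
    then have "povm_effect Q" using assms(1,2) unfolding measurement_family_def by blast
    then show "cmod (trace (Q ** (R - S))) \<le> 8 * real CARD('n) ^ 2"
      using trace_bound assms(3,4) by blast
  qed
  show le: "\<And>Q. Q \<in> M r \<Longrightarrow> cmod (trace (Q ** (R - S))) \<le> beta M r R S"
    unfolding beta_def by (rule cSup_upper[OF _ bdd]) auto
  show "beta M r R S \<ge> 0" using le[OF I] norm_ge_zero order_trans by blast
qed

lemma cns: "(complex_of_real (cmod z))^2 = z * cnj z"
  by (metis complex_norm_square of_real_power)

lemma density_proj:
  assumes "unit_vec (v::complex^'n)" shows "density (proj v)"
proof -
  have "qform (proj v) w = of_real ((cmod (\<Sum>i\<in>UNIV. cnj (w$i) * v$i))^2)" for w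
  proof -
    have e1: "qform (proj v) w = (\<Sum>i\<in>UNIV. \<Sum>k\<in>UNIV. (cnj (w$i) * v$i) * (w$k * cnj (v$k)))"
      unfolding qform_expand proj_def by (simp add: mult_ac)
    have e2: "(\<Sum>i\<in>UNIV. \<Sum>k\<in>UNIV. (cnj (w$i) * v$i) * (w$k * cnj (v$k))) = (\<Sum>i\<in>UNIV. cnj (w$i) * v$i) * (\<Sum>k\<in>UNIV. w$k * cnj (v$k))"
      by (rule sum_product[symmetric])
    have e3: "(\<Sum>k\<in>UNIV. w$k * cnj (v$k)) = cnj (\<Sum>i\<in>UNIV. cnj (w$i) * v$i)"
      by (simp add: mult.commute)
    show ?thesis unfolding e1 e2 e3 complex_norm_square by (rule refl)
  qed
  then have ps: "psd (proj v)" unfolding psd_def by simp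
  have "trace (proj v) = (\<Sum>i\<in>UNIV. v$i * cnj (v$i))"
    unfolding trace_def proj_def by simp
  also have "\<dots> = of_real (\<Sum>i\<in>UNIV. (cmod (v$i))^2)"
    by (simp only: of_real_sum complex_norm_square)
  also have "\<dots> = 1" using assms unfolding unit_vec_def by simp
  finally have "trace (proj v) = 1" .
  then show ?thesis using ps unfolding density_def by simp
qed

lemma density_mix: "density (mat (1 / of_nat CARD('n)) :: complex^'n^'n)"
proof -
  have "qform (mat (1 / of_nat CARD('n)) :: complex^'n^'n) w = (\<Sum>i\<in>UNIV. cnj (w$i) * (1 / of_nat CARD('n)) * w$i)" for w
  proof -
    have "(\<Sum>k\<in>UNIV. cnj (w$i) * (mat (1 / of_nat CARD('n)) :: complex^'n^'n)$i$k * w$k) = cnj (w$i) * (1 / of_nat CARD('n)) * w$i" for i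
      by (subst sum_one_UNIV[where a=i]) (simp_all add: mat_def)
    then show ?thesis unfolding qform_expand by simp
  qed
  also have "\<dots> w = (\<Sum>i\<in>UNIV. of_real ((cmod (w$i))^2 / real CARD('n)))" for w
  proof (rule sum.cong)
    fix x
    have "cnj (w$x) * (1 / of_nat CARD('n)) * w$x = (w$x * cnj (w$x)) / of_real (real CARD('n))"
      by simp
    then show "cnj (w$x) * (1 / of_nat CARD('n)) * w$x = of_real ((cmod (w$x))^2 / real CARD('n))"
      by (simp only: of_real_divide complex_norm_square)
  qed simp
  also have "\<dots> w = of_real ((\<Sum>i\<in>UNIV. (cmod (w$i))^2) / real CARD('n))" for w
    by (simp only: of_real_sum sum_divide_distrib)
  finally have "psd (mat (1 / of_nat CARD('n)) :: complex^'n^'n)" unfolding psd_def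
    by (simp add: sum_nonneg)
  moreover have "trace (mat (1 / of_nat CARD('n)) :: complex^'n^'n) = 1"
    by (simp add: trace_def mat_def)
  ultimately show ?thesis unfolding density_def by simp
qed

lemma DH_bound:
  fixes M :: "real \<Rightarrow> (complex^'n^'n) set"
  assumes I: "mat 1 \<in> M r" and tr: "Re (trace \<rho>) \<ge> \<eta>" and L: "L > 0"
    and H: "\<And>Q. Q \<in> M r \<Longrightarrow> Re (trace (Q ** \<rho>)) \<ge> \<eta> \<Longrightarrow>
               Re (trace (Q ** \<Gamma>)) / Re (trace (Q ** \<rho>)) \<ge> L"
  shows "\<exists>m. m \<ge> L \<and> DH M r \<eta> \<rho> \<Gamma> = ereal (- ln m)"
proof -
  define S where "S = {Re (trace (Q ** \<Gamma>)) / Re (trace (Q ** \<rho>)) | Q. Q \<in> M r \<and> Re (trace (Q ** \<rho>)) \<ge> \<eta>}"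
  have "Re (trace (mat 1 ** \<Gamma>)) / Re (trace (mat 1 ** \<rho>)) \<in> S"
    unfolding S_def using I tr by (intro CollectI exI[of _ "mat 1"]) simp
  then have ne: "S \<noteq> {}" by blast
  have "Inf S \<ge> L"
  proof (rule cInf_greatest[OF ne])
    fix x assume "x \<in> S"
    then obtain Q where "Q \<in> M r" "Re (trace (Q ** \<rho>)) \<ge> \<eta>"
      "x = Re (trace (Q ** \<Gamma>)) / Re (trace (Q ** \<rho>))" unfolding S_def by blast
    then show "L \<le> x" using H by blast
  qed
  moreover have "DH M r \<eta> \<rho> \<Gamma> = (if Inf S = 0 then \<infinity> else ereal (- ln (Inf S)))"
    unfolding DH_def Let_def S_def by (rule refl)
  ultimately show ?thesis using L by (intro exI[of _ "Inf S"]) simp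
qed

lemma ratio_bound:
  fixes s t b \<eta> :: real
  assumes "s \<ge> t - b" "t \<ge> \<eta>" "\<eta> > 0" "b \<ge> 0"
  shows "s / t \<ge> 1 - b / \<eta>"
proof -
  have t: "t > 0" using assms by linarith
  have "b * \<eta> \<le> b * t" using assms by (simp add: mult_left_mono)
  then have "b \<le> b * t / \<eta>" using assms(3) by (simp add: le_divide_eq)
  moreover have "(1 - b / \<eta>) * t = t - b * t / \<eta>" by (simp add: algebra_simps)
  ultimately have "(1 - b / \<eta>) * t \<le> s" using assms(1) by linarith
  then show ?thesis using t by (simp add: le_divide_eq)
qed

lemma part1:
  fixes M :: "real \<Rightarrow> (complex^'n^'n) set"
  assumes mf: "measurement_family M" and dr: "density \<rho>" and ds: "density \<sigma>"
    and r: "r \<ge> 0" and eta: "0 < \<eta>" "\<eta> \<le> 1" and lt: "beta M r \<rho> \<sigma> < \<eta>"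
  shows "DH M r \<eta> \<rho> \<sigma> \<le> ereal (- ln (1 - beta M r \<rho> \<sigma> / \<eta>))"
proof -
  define b where "b = beta M r \<rho> \<sigma>"
  have b0: "b \<ge> 0" unfolding b_def by (rule beta_props(2)[OF mf r dr ds])
  have I: "mat 1 \<in> M r" using mf r unfolding measurement_family_def by blast
  have tr: "Re (trace \<rho>) \<ge> \<eta>" using dr eta unfolding density_def by simp
  have L: "1 - b / \<eta> > 0" using lt eta unfolding b_def by (simp add: field_simps)
  have H: "Re (trace (Q ** \<sigma>)) / Re (trace (Q ** \<rho>)) \<ge> 1 - b / \<eta>"
    if Q: "Q \<in> M r" "Re (trace (Q ** \<rho>)) \<ge> \<eta>" for Q
  proof (rule ratio_bound[OF _ Q(2) eta(1) b0])
    have "Re (trace (Q ** (\<rho> - \<sigma>))) \<le> cmod (trace (Q ** (\<rho> - \<sigma>)))" by (rule complex_Re_le_cmod)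
    also have "\<dots> \<le> b" unfolding b_def by (rule beta_props(1)[OF mf r dr ds Q(1)])
    finally show "Re (trace (Q ** \<sigma>)) \<ge> Re (trace (Q ** \<rho>)) - b"
      unfolding trace_mult_diff by simp
  qed
  obtain m where m: "m \<ge> 1 - b / \<eta>" "DH M r \<eta> \<rho> \<sigma> = ereal (- ln m)"
    using DH_bound[where M=M and r=r and \<rho>=\<rho> and \<Gamma>=\<sigma>, OF I tr L H] by blast
  have "ln (1 - b / \<eta>) \<le> ln m" using m(1) L by simp
  then show ?thesis using m(2) unfolding b_def by simp
qed

lemma part2:
  fixes M :: "real \<Rightarrow> (complex^'n^'n) set" and v :: "complex^'n"
  assumes mf: "measurement_family M" and v: "unit_vec v" and d0: "\<delta> \<ge> 0"
    and r: "r \<ge> 0" and eta: "0 < \<eta>" "\<eta> \<le> 1" and C: "ereal r < C_strong M \<delta> v"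
    and eb: "\<eta> > 1 - 1 / real CARD('n) - \<delta>"
  shows "(let c = (1 - 1 / real CARD('n) - \<delta>) / \<eta> in
               c < 1 \<and> HH M r \<eta> (proj v) > ereal (ln (real CARD('n)) - ln (1 / (1 - c))))"
proof -
  define d where "d = real CARD('n)"
  define b0 where "b0 = 1 - 1 / real CARD('n) - \<delta>"
  define c where "c = b0 / \<eta>"
  define \<pi> where "\<pi> = (mat (1 / of_nat CARD('n)) :: complex^'n^'n)"
  define b where "b = beta M r (proj v) \<pi>"
  have dpos: "d > 0" unfolding d_def by simp
  have c1: "c < 1" unfolding c_def b0_def using eb eta by (simp add: field_simps)
  have dr: "density (proj v)" by (rule density_proj[OF v])
  have ds: "density \<pi>" unfolding \<pi>_def by (rule density_mix)
  have bb: "b < b0"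
  proof (rule ccontr)
    assume "\<not> b < b0"
    then have "r \<in> {r. r \<ge> 0 \<and> beta M r (proj v) (mat (1 / of_nat CARD('n)) :: complex^'n^'n)
                         \<ge> 1 - 1 / real CARD('n) - \<delta>}"
      using r unfolding b_def b0_def \<pi>_def by simp
    then have "C_strong M \<delta> v \<le> ereal r" unfolding C_strong_def by (rule INF_lower)
    then show False using C by simp
  qed
  have b00: "b \<ge> 0" unfolding b_def by (rule beta_props(2)[OF mf r dr ds])
  have I: "mat 1 \<in> M r" using mf r unfolding measurement_family_def by blast
  have tr: "Re (trace (proj v)) \<ge> \<eta>" using dr eta unfolding density_def by simp
  have "b < \<eta>" using bb eb unfolding b0_def by linarith
  then have Lpos: "1 - b / \<eta> > 0" using eta by (simp add: field_simps)
  have L: "d * (1 - b / \<eta>) > 0" using Lpos dpos by simp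
  have H: "Re (trace (Q ** mat 1)) / Re (trace (Q ** proj v)) \<ge> d * (1 - b / \<eta>)"
    if Q: "Q \<in> M r" "Re (trace (Q ** proj v)) \<ge> \<eta>" for Q
  proof -
    have "Re (trace (Q ** (proj v - \<pi>))) \<le> cmod (trace (Q ** (proj v - \<pi>)))" by (rule complex_Re_le_cmod)
    also have "\<dots> \<le> b" unfolding b_def by (rule beta_props(1)[OF mf r dr ds Q(1)])
    finally have "Re (trace (Q ** proj v)) - Re (trace Q) / d \<le> b"
      unfolding trace_mult_diff \<pi>_def trace_mult_mat d_def by simp
    then have "Re (trace Q) / d \<ge> Re (trace (Q ** proj v)) - b" by simp
    then have "(Re (trace Q) / d) / Re (trace (Q ** proj v)) \<ge> 1 - b / \<eta>"
      by (rule ratio_bound[OF _ Q(2) eta(1) b00])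
    then have "d * ((Re (trace Q) / d) / Re (trace (Q ** proj v))) \<ge> d * (1 - b / \<eta>)"
      using dpos by (rule mult_left_mono[OF _ less_imp_le])
    moreover have "Re (trace (Q ** proj v)) > 0" using Q(2) eta by linarith
    then have "d * ((Re (trace Q) / d) / Re (trace (Q ** proj v))) = Re (trace Q) / Re (trace (Q ** proj v))"
      using dpos by (simp add: field_simps)
    moreover have "trace (Q ** mat 1) = trace Q" by simp
    ultimately show ?thesis by simp
  qed
  obtain m where m: "m \<ge> d * (1 - b / \<eta>)" "DH M r \<eta> (proj v) (mat 1) = ereal (- ln m)"
    using DH_bound[where M=M and r=r and \<rho>="proj v" and \<Gamma>="mat 1", OF I tr L H] by blast
  have "b / \<eta> < c" unfolding c_def using bb eta by (simp add: divide_strict_right_mono)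
  then have "d * (1 - c) < d * (1 - b / \<eta>)" using dpos by simp
  then have lt: "d * (1 - c) < m" using m(1) by linarith
  have pos: "d * (1 - c) > 0" using c1 dpos by simp
  have "ln (d * (1 - c)) < ln m" using lt pos by simp
  moreover have "ln (d * (1 - c)) = ln d - ln (1 / (1 - c))"
    using c1 dpos by (simp add: ln_mult ln_div)
  ultimately have "ereal (ln d - ln (1 / (1 - c))) < HH M r \<eta> (proj v)"
    unfolding HH_def m(2) by simp
  then show ?thesis using c1 unfolding Let_def c_def b0_def d_def by simp
qed

theorem propositionD14:
  fixes M :: "real \<Rightarrow> (complex^'n^'n) set"
  assumes "measurement_family M"
  shows "(\<forall>\<rho> \<sigma> r \<eta>. density \<rho> \<and> density \<sigma> \<and> r \<ge> 0 \<and> 0 < \<eta> \<and> \<eta> \<le> 1 \<and> beta M r \<rho> \<sigma> < \<eta> \<longrightarrow>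
            DH M r \<eta> \<rho> \<sigma> \<le> ereal (- ln (1 - beta M r \<rho> \<sigma> / \<eta>)))
       \<and> (\<forall>(v::complex^'n) \<delta> r \<eta>. unit_vec v \<and> \<delta> \<ge> 0 \<and> r \<ge> 0 \<and> 0 < \<eta> \<and> \<eta> \<le> 1 \<and>
            ereal r < C_strong M \<delta> v \<and> \<eta> > 1 - 1 / real CARD('n) - \<delta> \<longrightarrow>
            (let c = (1 - 1 / real CARD('n) - \<delta>) / \<eta> in
               c < 1 \<and> HH M r \<eta> (proj v) > ereal (ln (real CARD('n)) - ln (1 / (1 - c)))))"
  using part1[OF assms] part2[OF assms] by blast

end
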